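(* Let $F = \bigwedge_{i\in[c]} C_i$ be a 3-SAT formula over the $p$ variables $x_1,\dots,x_p$ with clauses $C_1,\dots,C_c$, and let $A$ be a partial assignment on these variables, where clauses and partial assignments are viewed as elements of $\mathcal{B}$. Then: 1. (Satisfiability checking) $A \models F$ if and only if $\min_{i\in[c]} E(C_i)\cdot E(A) \ge 1$. 2. (Conflict detection) $F \models \lnot A$ if and only if $\min_{i\in[c]} E(C_i)\cdot E_{\text{not-false}}(A) = 0$. 3. (Deduction) Let $D := \{\ell \in L \mid F\land A \models_1 \ell\}$. Then $$E(D) = \max\Big[\min\Big(\sum_{i\in[c]} E(C_i)\,\mathbf{1}_{\{E(C_i)\cdot E_{\text{not-false}}(A) = 1\}},\ 1\Big) - E_{\text{assigned}}(A),\ 0\Big],$$ where $\max$ and $\min$ are applied elementwise.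
   Context: Literals: $L = \{x_1,\lnot x_1,\dots,x_p,\lnot x_p\}$. $\mathcal{B}$ is the set of subsets of $L$ that do not contain both $x_v$ and $\lnot x_v$ for any $v$. A clause $C\in\mathcal{B}$ denotes the disjunction of its literals; a partial assignment $A\in\mathcal{B}$ sets $x_v$ true if $x_v\in A$, false if $\lnot x_v\in A$, and leaves $x_v$ unassigned otherwise. A 3-SAT formula is a conjunction of clauses each with at most 3 literals. Encodings $E, E_{\text{not-false}}, E_{\text{assigned}}: \mathcal{B}\to\mathbb{R}^{2p}$: for $v\in[p]$, $E(B)_v = \mathbf{1}_{x_v\in B}$, $E(B)_{v+p} = \mathbf{1}_{\lnot x_v\in B}$; $E_{\text{not-false}}(B)_v = \mathbf{1}_{\lnot x_v\notin B}$, $E_{\text{not-false}}(B)_{v+p} = \mathbf{1}_{x_v\notin B}$; $E_{\text{assigned}}(B)_v = E_{\text{assigned}}(B)_{v+p} = \mathbf{1}_{x_v\in B \text{ or } \lnot x_v\in B}$. $A\models F$ means every clause $C_i$ contains a literal belonging to $A$. A literal is forced false by $A$ if its negation belongs to $A$. $F\models\lnot A$ means some clause $C_i$ has all of its literals forced false by $A$. $F\land A\models_1 \ell$ (unit propagation) means there is a clause $C_i$ that is not satisfied by $A$ (contains no literal of $A$) and, after deleting from $C_i$ all literals forced false by $A$, the remaining clause is exactly $\{\ell\}$. For a set $D\subseteq L$, $E(D)$ is defined by the same formula as for $\mathcal{B}$. *)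

theory Defs
  imports Complex_Main "HOL-Library.Extended_Real"
begin

text \<open>Literals over variables indexed 0..p-1 (variable x_(v+1) of the paper is index v).\<close>
datatype lit = Pos nat | Neg nat

fun neg :: "lit \<Rightarrow> lit" where
  "neg (Pos v) = Neg v"
| "neg (Neg v) = Pos v"

definition Lits :: "nat \<Rightarrow> lit set" where
  "Lits p = {Pos v | v. v < p} \<union> {Neg v | v. v < p}"

definition BB :: "nat \<Rightarrow> lit set set" where
  "BB p = {S. S \<subseteq> Lits p \<and> (\<forall>v. \<not> (Pos v \<in> S \<and> Neg v \<in> S))}"

text \<open>Vectors in R^(2p) as functions nat => real; only indices < 2p are meaningful.
  Index v (v<p) corresponds to coordinate v+1 of the paper, index v+p to coordinate v+p+1.\<close>
definition Enc :: "nat \<Rightarrow> lit set \<Rightarrow> nat \<Rightarrow> real" where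
  "Enc p S i = (if i < p then (if Pos i \<in> S then 1 else 0)
               else if i < 2*p then (if Neg (i - p) \<in> S then 1 else 0) else 0)"

definition Enc_nf :: "nat \<Rightarrow> lit set \<Rightarrow> nat \<Rightarrow> real" where
  "Enc_nf p S i = (if i < p then (if Neg i \<notin> S then 1 else 0)
               else if i < 2*p then (if Pos (i - p) \<notin> S then 1 else 0) else 0)"

definition Enc_as :: "nat \<Rightarrow> lit set \<Rightarrow> nat \<Rightarrow> real" where
  "Enc_as p S i = (if i < p then (if Pos i \<in> S \<or> Neg i \<in> S then 1 else 0)
               else if i < 2*p then (if Pos (i - p) \<in> S \<or> Neg (i - p) \<in> S then 1 else 0) else 0)"

definition dotp :: "nat \<Rightarrow> (nat \<Rightarrow> real) \<Rightarrow> (nat \<Rightarrow> real) \<Rightarrow> real" where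
  "dotp p u w = (\<Sum>i<2*p. u i * w i)"

definition sat :: "lit set \<Rightarrow> nat \<Rightarrow> (nat \<Rightarrow> lit set) \<Rightarrow> bool" where
  "sat A c C = (\<forall>i<c. \<exists>l\<in>C i. l \<in> A)"

definition forced_false :: "lit set \<Rightarrow> lit \<Rightarrow> bool" where
  "forced_false A l = (neg l \<in> A)"

definition entails_negA :: "nat \<Rightarrow> (nat \<Rightarrow> lit set) \<Rightarrow> lit set \<Rightarrow> bool" where
  "entails_negA c C A = (\<exists>i<c. \<forall>l\<in>C i. forced_false A l)"

definition unit_prop :: "nat \<Rightarrow> (nat \<Rightarrow> lit set) \<Rightarrow> lit set \<Rightarrow> lit \<Rightarrow> bool" where
  "unit_prop c C A l = (\<exists>i<c. (\<forall>m\<in>C i. m \<notin> A) \<and> {m \<in> C i. \<not> forced_false A m} = {l})"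

end

theory Submission
  imports Defs
begin

definition lit_of :: "nat \<Rightarrow> nat \<Rightarrow> lit" where
  "lit_of p i = (if i < p then Pos i else Neg (i - p))"

lemma lit_of_bij: "bij_betw (lit_of p) {..<2*p} (Lits p)"
proof -
  have "inj_on (lit_of p) {..<2*p}"
    by (auto simp: inj_on_def lit_of_def split: if_splits)
  moreover have "lit_of p ` {..<2*p} = Lits p"
  proof
    show "lit_of p ` {..<2*p} \<subseteq> Lits p" by (auto simp: lit_of_def Lits_def)
    show "Lits p \<subseteq> lit_of p ` {..<2*p}"
    proof
      fix l assume "l \<in> Lits p"
      then obtain v where "v < p" "l = Pos v \<or> l = Neg v" by (auto simp: Lits_def)
      then show "l \<in> lit_of p ` {..<2*p}"
      proof (elim disjE)
        assume "l = Pos v" then show ?thesis using \<open>v<p\<close>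
          by (intro image_eqI[of _ _ v]) (auto simp: lit_of_def)
      next
        assume "l = Neg v" then show ?thesis using \<open>v<p\<close>
          by (intro image_eqI[of _ _ "v+p"]) (auto simp: lit_of_def)
      qed
    qed
  qed
  ultimately show ?thesis by (simp add: bij_betw_def)
qed

lemma Enc_lit: "i < 2*p \<Longrightarrow> Enc p S i = (if lit_of p i \<in> S then 1 else 0)"
  by (simp add: Enc_def lit_of_def)

lemma Enc_nf_lit: "i < 2*p \<Longrightarrow> Enc_nf p S i = (if neg (lit_of p i) \<notin> S then 1 else 0)"
  by (simp add: Enc_nf_def lit_of_def)

lemma Enc_as_lit: "i < 2*p \<Longrightarrow> Enc_as p S i = (if lit_of p i \<in> S \<or> neg (lit_of p i) \<in> S then 1 else 0)"
  by (auto simp add: Enc_as_def lit_of_def)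

lemma dotp_gen:
  assumes S: "S \<subseteq> Lits p" and w: "\<forall>i<2*p. w i = g (lit_of p i)"
  shows "dotp p (Enc p S) w = (\<Sum>l\<in>S. g l)"
proof -
  have "dotp p (Enc p S) w = (\<Sum>i\<in>{..<2*p}. if lit_of p i \<in> S then g (lit_of p i) else 0)"
    unfolding dotp_def by (rule sum.cong) (auto simp: Enc_lit w)
  also have "\<dots> = (\<Sum>i\<in>{i\<in>{..<2*p}. lit_of p i \<in> S}. g (lit_of p i))"
    by (simp add: sum.inter_filter[symmetric] lessThan_def)
  also have "\<dots> = (\<Sum>l\<in>S. g l)"
  proof (rule sum.reindex_bij_betw)
    show "bij_betw (lit_of p) {i \<in> {..<2*p}. lit_of p i \<in> S} S"
    proof (rule bij_betw_subset[OF lit_of_bij])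
      show "{i \<in> {..<2*p}. lit_of p i \<in> S} \<subseteq> {..<2*p}" by auto
      have im: "lit_of p ` {..<2*p} = Lits p" using lit_of_bij by (simp add: bij_betw_def)
      show "lit_of p ` {i \<in> {..<2*p}. lit_of p i \<in> S} = S"
      proof
        show "S \<subseteq> lit_of p ` {i \<in> {..<2*p}. lit_of p i \<in> S}"
        proof
          fix x assume "x \<in> S"
          then have "x \<in> lit_of p ` {..<2*p}" using S im by auto
          then obtain i where "i < 2*p" "x = lit_of p i" by auto
          then show "x \<in> lit_of p ` {i \<in> {..<2*p}. lit_of p i \<in> S}" using \<open>x \<in> S\<close> by auto
        qed
      qed auto
    qed
  qed
  finally show ?thesis .
qed

lemma Lits_finite: "finite (Lits p)"
proof -
  have "Lits p = lit_of p ` {..<2*p}" using lit_of_bij by (simp add: bij_betw_def)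
  then show ?thesis by simp
qed

lemma dotp_card:
  assumes S: "S \<subseteq> Lits p" and w: "\<forall>i<2*p. w i = (if P (lit_of p i) then 1 else 0)"
  shows "dotp p (Enc p S) w = real (card {l\<in>S. P l})"
proof -
  have fin: "finite S" using S Lits_finite finite_subset by blast
  have "dotp p (Enc p S) w = (\<Sum>l\<in>S. if P l then 1 else 0)"
    by (rule dotp_gen[OF S w])
  also have "\<dots> = (\<Sum>l\<in>{l\<in>S. P l}. 1)"
    using fin by (simp add: sum.inter_filter[symmetric])
  finally show ?thesis by simp
qed

lemma dot1: "S \<subseteq> Lits p \<Longrightarrow> dotp p (Enc p S) (Enc p A) = real (card {l\<in>S. l \<in> A})"
  by (rule dotp_card[where P="\<lambda>l. l \<in> A"]) (auto simp add: Enc_lit)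

lemma dot2: "S \<subseteq> Lits p \<Longrightarrow> dotp p (Enc p S) (Enc_nf p A) = real (card {l\<in>S. neg l \<notin> A})"
  by (rule dotp_card[where P="\<lambda>l. neg l \<notin> A"]) (auto simp add: Enc_nf_lit)

theorem mainTheorem2:
  fixes p c :: nat and C :: "nat \<Rightarrow> lit set" and A :: "lit set"
  assumes clauses: "\<forall>i<c. C i \<in> BB p \<and> card (C i) \<le> 3"
    and assignment: "A \<in> BB p"
  shows "(sat A c C \<longleftrightarrow> (INF i\<in>{..<c}. ereal (dotp p (Enc p (C i)) (Enc p A))) \<ge> 1)
       \<and> (entails_negA c C A \<longleftrightarrow> (INF i\<in>{..<c}. ereal (dotp p (Enc p (C i)) (Enc_nf p A))) = 0)
       \<and> (\<forall>k<2*p. Enc p {l \<in> Lits p. unit_prop c C A l} k =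
           max (min (\<Sum>i<c. Enc p (C i) k *
                      (if dotp p (Enc p (C i)) (Enc_nf p A) = 1 then 1 else 0)) 1
                - Enc_as p A k) 0)"
proof -
  have sub: "\<And>i. i < c \<Longrightarrow> C i \<subseteq> Lits p" using clauses by (auto simp: BB_def)
  have fin: "\<And>i. i < c \<Longrightarrow> finite (C i)" using sub Lits_finite finite_subset by blast
  have cons: "\<And>m. m \<in> A \<Longrightarrow> neg m \<notin> A"
  proof -
    fix m assume "m \<in> A" then show "neg m \<notin> A" using assignment
      by (cases m) (auto simp: BB_def)
  qed
  have P1: "sat A c C \<longleftrightarrow> (INF i\<in>{..<c}. ereal (dotp p (Enc p (C i)) (Enc p A))) \<ge> 1"
  proof -
    have "(INF i\<in>{..<c}. ereal (dotp p (Enc p (C i)) (Enc p A))) \<ge> 1 \<longleftrightarrow>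
          (\<forall>i<c. card {l\<in>C i. l \<in> A} \<ge> 1)"
      by (auto simp add: le_INF_iff dot1 sub)
    also have "\<dots> \<longleftrightarrow> sat A c C"
      unfolding sat_def
    proof (intro iffI allI impI)
      fix i assume "\<forall>i<c. 1 \<le> card {l \<in> C i. l \<in> A}" "i < c"
      then have "card {l \<in> C i. l \<in> A} \<noteq> 0" by fastforce
      then have "{l \<in> C i. l \<in> A} \<noteq> {}" by (metis card.empty)
      then show "\<exists>l\<in>C i. l \<in> A" by blast
    next
      fix i assume "\<forall>i<c. \<exists>l\<in>C i. l \<in> A" "i < c"
      then obtain l where "l \<in> C i" "l \<in> A" by blast
      moreover have "finite {l \<in> C i. l \<in> A}" using fin \<open>i<c\<close> by simp
      ultimately have "card {l \<in> C i. l \<in> A} \<noteq> 0" by auto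
      then show "1 \<le> card {l \<in> C i. l \<in> A}" by simp
    qed
    finally show ?thesis by simp
  qed
  have P2: "entails_negA c C A \<longleftrightarrow> (INF i\<in>{..<c}. ereal (dotp p (Enc p (C i)) (Enc_nf p A))) = 0"
  proof -
    have ff: "\<And>i. i < c \<Longrightarrow> (\<forall>l\<in>C i. forced_false A l) \<longleftrightarrow> card {l\<in>C i. neg l \<notin> A} = 0"
      using fin by (auto simp: forced_false_def)
    show ?thesis
    proof
      assume "entails_negA c C A"
      then obtain i where i: "i < c" "\<forall>l\<in>C i. forced_false A l" by (auto simp: entails_negA_def)
      have "(INF i\<in>{..<c}. ereal (dotp p (Enc p (C i)) (Enc_nf p A))) \<le> ereal (dotp p (Enc p (C i)) (Enc_nf p A))"
        using i by (intro INF_lower) simp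
      also have "\<dots> = 0" using i ff sub by (simp add: dot2)
      finally have le: "(INF i\<in>{..<c}. ereal (dotp p (Enc p (C i)) (Enc_nf p A))) \<le> 0" .
      have "0 \<le> (INF i\<in>{..<c}. ereal (dotp p (Enc p (C i)) (Enc_nf p A)))"
      proof (rule INF_greatest)
        fix j assume "j \<in> {..<c}"
        then show "0 \<le> ereal (dotp p (Enc p (C j)) (Enc_nf p A))" by (simp add: dot2 sub)
      qed
      then show "(INF i\<in>{..<c}. ereal (dotp p (Enc p (C i)) (Enc_nf p A))) = 0"
        using le by (rule antisym[rotated])
    next
      assume H: "(INF i\<in>{..<c}. ereal (dotp p (Enc p (C i)) (Enc_nf p A))) = 0"
      show "entails_negA c C A"
      proof (rule ccontr)
        assume "\<not> entails_negA c C A"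
        then have "\<forall>i<c. card {l\<in>C i. neg l \<notin> A} \<noteq> 0" using ff by (auto simp: entails_negA_def)
        then have "(INF i\<in>{..<c}. ereal (dotp p (Enc p (C i)) (Enc_nf p A))) \<ge> 1"
          by (auto intro!: INF_greatest simp: dot2 sub Suc_le_eq)
        then show False using H by simp
      qed
    qed
  qed
  have P3: "\<forall>k<2*p. Enc p {l \<in> Lits p. unit_prop c C A l} k =
           max (min (\<Sum>i<c. Enc p (C i) k *
                      (if dotp p (Enc p (C i)) (Enc_nf p A) = 1 then 1 else 0)) 1
                - Enc_as p A k) 0"
  proof (intro allI impI)
    fix k assume k: "k < 2*p"
    define l where "l = lit_of p k"
    have lL: "l \<in> Lits p" using lit_of_bij k unfolding l_def bij_betw_def by auto
    define s where "s = (\<Sum>i<c. Enc p (C i) k *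
                      (if dotp p (Enc p (C i)) (Enc_nf p A) = 1 then 1 else 0))"
    have s_eq: "s = (\<Sum>i<c. if l \<in> C i \<and> card {m\<in>C i. neg m \<notin> A} = 1 then 1 else 0)"
      unfolding s_def by (rule sum.cong) (auto simp: Enc_lit k l_def dot2 sub)
    have s0: "s \<ge> 0" unfolding s_eq by (rule sum_nonneg) simp
    have LHS: "Enc p {l \<in> Lits p. unit_prop c C A l} k = (if unit_prop c C A l then 1 else 0)"
      using lL by (simp add: Enc_lit k l_def)
    show "Enc p {l \<in> Lits p. unit_prop c C A l} k = max (min s 1 - Enc_as p A k) 0"
    proof (cases "l \<in> A \<or> neg l \<in> A")
      case True
      have "\<not> unit_prop c C A l"
      proof
        assume "unit_prop c C A l"
        then obtain i where i: "i < c" "\<forall>m\<in>C i. m \<notin> A" "{m \<in> C i. \<not> forced_false A m} = {l}"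
          by (auto simp: unit_prop_def)
        then have "l \<in> C i" "neg l \<notin> A" by (auto simp: forced_false_def)
        then show False using True i by auto
      qed
      then show ?thesis using True LHS s0
        by (simp add: Enc_as_lit k l_def[symmetric])
    next
      case False
      have "unit_prop c C A l \<longleftrightarrow> (\<exists>i<c. l \<in> C i \<and> card {m\<in>C i. neg m \<notin> A} = 1)"
      proof
        assume "unit_prop c C A l"
        then obtain i where i: "i < c" "\<forall>m\<in>C i. m \<notin> A" "{m \<in> C i. \<not> forced_false A m} = {l}"
          by (auto simp: unit_prop_def)
        then have "{m\<in>C i. neg m \<notin> A} = {l}" by (simp add: forced_false_def)
        then show "\<exists>i<c. l \<in> C i \<and> card {m\<in>C i. neg m \<notin> A} = 1" using i(1) by auto
      next
        assume "\<exists>i<c. l \<in> C i \<and> card {m\<in>C i. neg m \<notin> A} = 1"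
        then obtain i where i: "i < c" "l \<in> C i" "card {m\<in>C i. neg m \<notin> A} = 1" by blast
        then obtain x where x: "{m\<in>C i. neg m \<notin> A} = {x}" by (auto simp: card_Suc_eq)
        have "l \<in> {m\<in>C i. neg m \<notin> A}" using i False by auto
        then have "{m\<in>C i. neg m \<notin> A} = {l}" using x by auto
        moreover have "\<forall>m\<in>C i. m \<notin> A"
        proof (intro ballI notI)
          fix m assume "m \<in> C i" "m \<in> A"
          then have "m \<in> {m\<in>C i. neg m \<notin> A}" using cons by auto
          then have "m = l" using \<open>{m\<in>C i. neg m \<notin> A} = {l}\<close> by auto
          then show False using \<open>m \<in> A\<close> False by auto
        qed
        ultimately show "unit_prop c C A l" using i(1)
          unfolding unit_prop_def forced_false_def by auto
      qed
      moreover have "(\<exists>i<c. l \<in> C i \<and> card {m\<in>C i. neg m \<notin> A} = 1) \<Longrightarrow> s \<ge> 1"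
      proof -
        assume "\<exists>i<c. l \<in> C i \<and> card {m\<in>C i. neg m \<notin> A} = 1"
        then obtain i where i: "i < c" "l \<in> C i \<and> card {m\<in>C i. neg m \<notin> A} = 1" by blast
        have "(if l \<in> C i \<and> card {m\<in>C i. neg m \<notin> A} = 1 then 1 else 0) \<le> s"
          unfolding s_eq by (rule member_le_sum) (use i in auto)
        then show "s \<ge> 1" using i by simp
      qed
      moreover have "\<not> (\<exists>i<c. l \<in> C i \<and> card {m\<in>C i. neg m \<notin> A} = 1) \<Longrightarrow> s = 0"
        unfolding s_eq by (intro sum.neutral) auto
      ultimately show ?thesis using False LHS s0
        by (auto simp: Enc_as_lit k l_def[symmetric])
    qed
  qed
  show ?thesis using P1 P2 P3 by blast
qed

end
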